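(* Let $n,p\ge1$, let $\mathbf{X}\in\mathbb{R}^{n\times p}$ be fixed, $\beta^0\in\mathbb{R}^p$, and $\mathbf{Y}=\mathbf{X}\beta^0+\varepsilon$ with $\varepsilon_1,\ldots,\varepsilon_n$ i.i.d. $\mathcal{N}(0,\sigma^2)$, $\sigma>0$. Let $\lambda>0$, assume $\Omega_{\min}(\lambda)>0$, let $\hat\beta=\hat\beta(\lambda)=(\hat\Sigma+\lambda I_p)^{-1}n^{-1}\mathbf{X}^T\mathbf{Y}$, let $\hat\beta_{\mathrm{init}}$ be any estimator of $\beta^0$ (a measurable function of $\mathbf{Y}$), and define the corrected Ridge estimator $\hat\beta_{\mathrm{corr};j}=\hat\beta_j-\sum_{k\neq j}(P_{\mathbf{X}})_{jk}\hat\beta_{\mathrm{init};k}$, $j=1,\ldots,p$. Then $$\hat\beta_{\mathrm{corr};j}=Z_j+\gamma_j\quad(j=1,\ldots,p),$$ where $(Z_1,\ldots,Z_p)\sim\mathcal{N}_p(0,n^{-1}\sigma^2\Omega(\lambda))$ and $$\gamma_j=(P_{\mathbf{X}})_{jj}\beta^0_j-\sum_{k\neq j}(P_{\mathbf{X}})_{jk}(\hat\beta_{\mathrm{init};k}-\beta^0_k)+b_j(\lambda),\qquad b_j(\lambda)=\mathbb{E}[\hat\beta_j(\lambda)]-\theta^0_j.$$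
   Context: $\hat\Sigma=n^{-1}\mathbf{X}^T\mathbf{X}$; $P_{\mathbf{X}}=\mathbf{X}^T(\mathbf{X}\mathbf{X}^T)^{-}\mathbf{X}$ (Moore–Penrose pseudo-inverse), the orthogonal projection onto the row space of $\mathbf{X}$; $\theta^0=P_{\mathbf{X}}\beta^0$. $\Omega(\lambda)=(\hat\Sigma+\lambda I_p)^{-1}\hat\Sigma(\hat\Sigma+\lambda I_p)^{-1}$, $\Omega_{\min}(\lambda)=\min_j\Omega_{jj}(\lambda)$. *)

theory Defs
  imports "HOL-Probability.Probability"
begin

definition mp_pinv :: "real^'m^'n \<Rightarrow> real^'n^'m" where
  "mp_pinv A = (THE B. A ** B ** A = A \<and> B ** A ** B = B \<and>
                  transpose (A ** B) = A ** B \<and> transpose (B ** A) = B ** A)"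

text \<open>Design matrix X has n = CARD('n) rows and p = CARD('p) columns.\<close>
definition Sigma_hat :: "real^'p^'n \<Rightarrow> real^'p^'p" where
  "Sigma_hat X = (1 / real CARD('n)) *\<^sub>R (transpose X ** X)"

definition proj_X :: "real^'p^'n \<Rightarrow> real^'p^'p" where
  "proj_X X = transpose X ** mp_pinv (X ** transpose X) ** X"

definition theta0 :: "real^'p^'n \<Rightarrow> real^'p \<Rightarrow> real^'p" where
  "theta0 X beta0 = proj_X X *v beta0"

definition Omega :: "real^'p^'n \<Rightarrow> real \<Rightarrow> real^'p^'p" where
  "Omega X lam = matrix_inv (Sigma_hat X + lam *\<^sub>R mat 1) ** Sigma_hat X
                   ** matrix_inv (Sigma_hat X + lam *\<^sub>R mat 1)"

definition Omega_min :: "real^'p^'n \<Rightarrow> real \<Rightarrow> real" where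
  "Omega_min X lam = Min (range (\<lambda>j. Omega X lam $ j $ j))"

definition ridge :: "real^'p^'n \<Rightarrow> real \<Rightarrow> real^'n \<Rightarrow> real^'p" where
  "ridge X lam y = matrix_inv (Sigma_hat X + lam *\<^sub>R mat 1)
                     *v ((1 / real CARD('n)) *\<^sub>R (transpose X *v y))"

definition ridge_corr :: "real^'p^'n \<Rightarrow> real \<Rightarrow> (real^'n \<Rightarrow> real^'p) \<Rightarrow> real^'n \<Rightarrow> real^'p" where
  "ridge_corr X lam binit y = (\<chi> j. ridge X lam y $ j
       - (\<Sum>k\<in>UNIV - {j}. proj_X X $ j $ k * binit y $ k))"

definition real_normal :: "'a measure \<Rightarrow> ('a \<Rightarrow> real) \<Rightarrow> real \<Rightarrow> real \<Rightarrow> bool" where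
  "real_normal M Y m v \<longleftrightarrow> Y \<in> borel_measurable M \<and>
     ((v > 0 \<and> distributed M lborel Y (normal_density m (sqrt v))) \<or>
      (v = 0 \<and> distr M borel Y = return borel m))"

definition gaussian_vec :: "'a measure \<Rightarrow> ('a \<Rightarrow> real^'p) \<Rightarrow> real^'p \<Rightarrow> real^'p^'p \<Rightarrow> bool" where
  "gaussian_vec M Z mu C \<longleftrightarrow> Z \<in> borel_measurable M \<and>
     (\<forall>a. real_normal M (\<lambda>\<omega>. a \<bullet> Z \<omega>) (a \<bullet> mu) (a \<bullet> (C *v a)))"

end

theory Submission imports Defs begin

lemma (in prob_space) lincomb_normal:
  fixes eps :: "'a \<Rightarrow> real^'n" and w :: "real^'n"
  assumes sig: "s > 0"
    and d: "\<And>i. distributed M lborel (\<lambda>\<omega>. eps \<omega> $ i) (normal_density 0 s)"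
    and ind: "indep_vars (\<lambda>_. borel) (\<lambda>i \<omega>. eps \<omega> $ i) UNIV"
  shows "real_normal M (\<lambda>\<omega>. \<Sum>i\<in>UNIV. w $ i * eps \<omega> $ i) 0 (s\<^sup>2 * (w \<bullet> w))"
proof -
  have meas: "(\<lambda>\<omega>. eps \<omega> $ i) \<in> borel_measurable M" for i
    using distributed_measurable[OF d[of i]] by simp
  have mf: "(\<lambda>\<omega>. \<Sum>i\<in>UNIV. w $ i * eps \<omega> $ i) \<in> borel_measurable M"
    using meas by measurable
  have ww: "w \<bullet> w = (\<Sum>i\<in>UNIV. (w $ i)\<^sup>2)"
    by (simp add: inner_vec_def power2_eq_square)
  define I where "I = {i. w $ i \<noteq> 0}"
  show ?thesis
  proof (cases "I = {}")
    case True
    then have w0: "\<And>i. w $ i = 0" by (auto simp: I_def)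
    then have "w \<bullet> w = 0" by (simp add: ww)
    moreover have "(\<lambda>\<omega>. \<Sum>i\<in>UNIV. w $ i * eps \<omega> $ i) = (\<lambda>_. 0)" using w0 by simp
    ultimately show ?thesis unfolding real_normal_def using mf by simp
  next
    case False
    have fin: "finite I" by simp
    have sumI: "(\<Sum>i\<in>UNIV. w $ i * eps \<omega> $ i) = (\<Sum>i\<in>I. w $ i * eps \<omega> $ i)" for \<omega>
      by (rule sum.mono_neutral_right) (auto simp: I_def)
    have sumI2: "(\<Sum>i\<in>UNIV. (w $ i)\<^sup>2) = (\<Sum>i\<in>I. (w $ i)\<^sup>2)"
      by (rule sum.mono_neutral_right) (auto simp: I_def)
    have pos: "(\<Sum>i\<in>I. (w $ i)\<^sup>2) > 0"
      using False fin by (intro sum_pos) (auto simp: I_def)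
    have indI: "indep_vars (\<lambda>_. borel) (\<lambda>i \<omega>. w $ i * eps \<omega> $ i) I"
      by (rule indep_vars_compose2[where X="\<lambda>i \<omega>. eps \<omega> $ i" and Y="\<lambda>i x. w $ i * x", OF indep_vars_subset[OF ind]]) auto
    have di: "distributed M lborel (\<lambda>\<omega>. w $ i * eps \<omega> $ i) (normal_density 0 (\<bar>w $ i\<bar> * s))"
      if "i \<in> I" for i
      using normal_density_affine[OF d[of i] sig, of "w $ i" 0] that by (simp add: I_def)
    have "distributed M lborel (\<lambda>\<omega>. \<Sum>i\<in>I. w $ i * eps \<omega> $ i)
       (normal_density (\<Sum>i\<in>I. 0) (sqrt (\<Sum>i\<in>I. (\<bar>w $ i\<bar> * s)\<^sup>2)))"
      using sum_indep_normal[OF fin False indI, of "\<lambda>i. \<bar>w $ i\<bar> * s" "\<lambda>_. 0"] di sig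
      by (auto simp: I_def)
    moreover have "(\<Sum>i\<in>I. (\<bar>w $ i\<bar> * s)\<^sup>2) = s\<^sup>2 * (w \<bullet> w)"
      by (simp add: ww sumI2 power_mult_distrib sum_distrib_left mult.commute)
    ultimately show ?thesis unfolding real_normal_def using mf sumI pos sig ww sumI2
      by (simp add: zero_less_mult_iff)
  qed
qed

lemma dot_mat: "(u::real^'m) \<bullet> ((M::real^'k^'m) *v v) = (transpose M *v u) \<bullet> v"
  by (simp add: dot_lmul_matrix)

lemma Bsym: "transpose (Sigma_hat X + lam *\<^sub>R mat 1) = Sigma_hat X + lam *\<^sub>R mat 1"
  by (simp add: Sigma_hat_def vec_eq_iff transpose_def matrix_matrix_mult_def mat_def mult.commute)

lemma B_apply: "(Sigma_hat (X::real^'p^'n) + lam *\<^sub>R mat 1) *v x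
   = (1 / real CARD('n)) *\<^sub>R (transpose X *v (X *v x)) + lam *\<^sub>R x"
  by (simp add: Sigma_hat_def matrix_vector_mult_add_rdistrib matrix_vector_mul_assoc
      scaleR_matrix_vector_assoc[symmetric])

lemma B_inv:
  fixes X :: "real^'p^'n"
  assumes lam: "lam > 0"
  defines "B \<equiv> Sigma_hat X + lam *\<^sub>R mat 1"
  shows "B ** matrix_inv B = mat 1 \<and> matrix_inv B ** B = mat 1 \<and> transpose (matrix_inv B) = matrix_inv B"
proof -
  have ker: "\<forall>x. B *v x = 0 \<longrightarrow> x = 0"
  proof (intro allI impI)
    fix x assume "B *v x = 0"
    then have "x \<bullet> (B *v x) = 0" by simp
    moreover have "x \<bullet> (B *v x) = (1 / real CARD('n)) * ((X *v x) \<bullet> (X *v x)) + lam * (x \<bullet> x)"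
      unfolding B_def B_apply by (simp add: inner_add_right dot_mat inner_commute)
    moreover have "(X *v x) \<bullet> (X *v x) \<ge> 0" by simp
    ultimately have "lam * (x \<bullet> x) \<le> 0"
      by (smt (verit) divide_nonneg_nonneg mult_nonneg_nonneg of_nat_0_le_iff)
    then have "x \<bullet> x \<le> 0" using lam by (simp add: mult_le_0_iff)
    then show "x = 0" using inner_ge_zero[of x] inner_eq_zero_iff[of x] by linarith
  qed
  then have "invertible B"
    using matrix_left_invertible_ker invertible_left_inverse by blast
  then have 1: "B ** matrix_inv B = mat 1 \<and> matrix_inv B ** B = mat 1"
    unfolding invertible_def matrix_inv_def by (rule someI_ex)
  have tB: "transpose B = B" unfolding B_def by (rule Bsym)
  have "transpose (matrix_inv B) ** B = mat 1"
    using 1 by (metis matrix_transpose_mul tB transpose_mat)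
  then have "transpose (matrix_inv B) = matrix_inv B"
    using 1 by (metis matrix_mul_assoc matrix_mul_lid matrix_mul_rid)
  with 1 show ?thesis by simp
qed

theorem proposition2:
  fixes M :: "'a measure"
    and X :: "real^'p^'n" and beta0 :: "real^'p"
    and eps :: "'a \<Rightarrow> real^'n"
    and sigma lam :: real
    and binit :: "real^'n \<Rightarrow> real^'p"
  assumes "prob_space M"
    and "sigma > 0"
    and "\<And>i. distributed M lborel (\<lambda>\<omega>. eps \<omega> $ i) (normal_density 0 sigma)"
    and "prob_space.indep_vars M (\<lambda>_. borel) (\<lambda>i \<omega>. eps \<omega> $ i) UNIV"
    and "lam > 0"
    and "Omega_min X lam > 0"
    and "binit \<in> borel_measurable borel"
  shows "\<exists>Z. gaussian_vec M Z 0 ((sigma\<^sup>2 / real CARD('n)) *\<^sub>R Omega X lam) \<and>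
     (\<forall>\<omega>\<in>space M. \<forall>j.
        ridge_corr X lam binit (X *v beta0 + eps \<omega>) $ j
        = Z \<omega> $ j
          + (proj_X X $ j $ j * beta0 $ j
             - (\<Sum>k\<in>UNIV - {j}. proj_X X $ j $ k * (binit (X *v beta0 + eps \<omega>) $ k - beta0 $ k))
             + (prob_space.expectation M (\<lambda>\<omega>'. ridge X lam (X *v beta0 + eps \<omega>') $ j)
                - theta0 X beta0 $ j)))"
  proof -
  interpret prob_space M by (rule assms(1))
  note d = assms(3)
  define nn where "nn = real CARD('n)"
  have nn: "nn > 0" unfolding nn_def by simp
  define A where "A = matrix_inv (Sigma_hat X + lam *\<^sub>R mat 1)"
  have AB: "transpose A = A" using B_inv[OF assms(5), of X] unfolding A_def by simp
  define G where "G = (1 / nn) *\<^sub>R (A ** transpose X)"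
  define c where "c = A *v ((1 / nn) *\<^sub>R (transpose X *v (X *v beta0)))"
  define Z where "Z = (\<lambda>\<omega>. G *v eps \<omega>)"
  have dec: "ridge X lam (X *v beta0 + e) = c + G *v e" for e
    unfolding ridge_def c_def G_def A_def nn_def
    by (simp add: matrix_vector_right_distrib scaleR_right_distrib matrix_vector_mul_assoc[symmetric] scaleR_matrix_vector_assoc[symmetric] matrix_scaleR_vector_ac)
  have Zj: "Z \<omega> $ j = (\<Sum>i\<in>UNIV. G $ j $ i * eps \<omega> $ i)" for \<omega> j
    unfolding Z_def by (simp add: matrix_vector_mult_def)
  have meas: "(\<lambda>\<omega>. eps \<omega> $ i) \<in> borel_measurable M" for i
    using distributed_measurable[OF d[of i]] by simp
  have intg: "integrable M (\<lambda>\<omega>. eps \<omega> $ i)" for i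
    by (rule distributed_integrable_var[OF d[of i]]) (auto intro: integrable_normal_moment_nz_1 assms(2))
  have E0: "expectation (\<lambda>\<omega>. eps \<omega> $ i) = 0" for i
    using normal_distributed_expectation[OF assms(2) d[of i]] .
  have Eridge: "expectation (\<lambda>\<omega>'. ridge X lam (X *v beta0 + eps \<omega>') $ j) = c $ j" for j
  proof -
    have "expectation (\<lambda>\<omega>'. ridge X lam (X *v beta0 + eps \<omega>') $ j)
        = expectation (\<lambda>\<omega>. c $ j + (\<Sum>i\<in>UNIV. G $ j $ i * eps \<omega> $ i))"
      using Zj by (simp add: dec Z_def)
    also have "\<dots> = c $ j + (\<Sum>i\<in>UNIV. G $ j $ i * expectation (\<lambda>\<omega>. eps \<omega> $ i))"
      using intg by (simp add: Bochner_Integration.integral_add Bochner_Integration.integral_sum prob_space)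
    also have "\<dots> = c $ j" by (simp add: E0)
    finally show ?thesis .
  qed
  have gv: "gaussian_vec M Z 0 ((sigma\<^sup>2 / real CARD('n)) *\<^sub>R Omega X lam)"
    unfolding gaussian_vec_def
  proof (intro conjI allI)
    show "Z \<in> borel_measurable M"
    proof (subst borel_measurable_euclidean_space, intro ballI)
      fix b :: "real^'p" assume "b \<in> Basis"
      then obtain j where b: "b = axis j 1" by (auto simp: Basis_vec_def)
      have "(\<lambda>\<omega>. Z \<omega> \<bullet> b) = (\<lambda>\<omega>. \<Sum>i\<in>UNIV. G $ j $ i * eps \<omega> $ i)"
        unfolding b by (simp add: cart_eq_inner_axis[symmetric] Zj)
      moreover have "(\<lambda>\<omega>. \<Sum>i\<in>UNIV. G $ j $ i * eps \<omega> $ i) \<in> borel_measurable M"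
        using meas by measurable
      ultimately show "(\<lambda>\<omega>. Z \<omega> \<bullet> b) \<in> borel_measurable M" by simp
    qed
  next
    fix a :: "real^'p"
    define w where "w = transpose G *v a"
    have eq: "(\<lambda>\<omega>. a \<bullet> Z \<omega>) = (\<lambda>\<omega>. \<Sum>i\<in>UNIV. w $ i * eps \<omega> $ i)"
    proof (rule ext)
      fix \<omega>
      have "a \<bullet> Z \<omega> = w \<bullet> eps \<omega>" unfolding Z_def w_def by (rule dot_mat)
      then show "a \<bullet> Z \<omega> = (\<Sum>i\<in>UNIV. w $ i * eps \<omega> $ i)" by (simp add: inner_vec_def)
    qed
    have w: "w = (1 / nn) *\<^sub>R (X *v (A *v a))"
      unfolding w_def G_def
      by (simp add: transpose_scalar matrix_transpose_mul AB matrix_vector_mul_assoc scaleR_matrix_vector_assoc[symmetric])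
    have "a \<bullet> (((sigma\<^sup>2 / real CARD('n)) *\<^sub>R Omega X lam) *v a)
        = (sigma\<^sup>2 / nn) * (a \<bullet> (A *v ((1 / nn) *\<^sub>R (transpose X *v (X *v (A *v a))))))"
      unfolding Omega_def A_def[symmetric] nn_def[symmetric]
      by (simp add: scaleR_matrix_vector_assoc[symmetric] matrix_vector_mul_assoc[symmetric] Sigma_hat_def nn_def)
    also have "\<dots> = (sigma\<^sup>2 / nn) * (1 / nn) * ((X *v (A *v a)) \<bullet> (X *v (A *v a)))"
      by (simp add: dot_mat AB inner_commute)
    also have "\<dots> = sigma\<^sup>2 * (w \<bullet> w)"
      unfolding w by (simp add: power2_eq_square)
    finally have v: "a \<bullet> (((sigma\<^sup>2 / real CARD('n)) *\<^sub>R Omega X lam) *v a) = sigma\<^sup>2 * (w \<bullet> w)" .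
    show "real_normal M (\<lambda>\<omega>. a \<bullet> Z \<omega>) (a \<bullet> 0) (a \<bullet> (((sigma\<^sup>2 / real CARD('n)) *\<^sub>R Omega X lam) *v a))"
      unfolding eq v using lincomb_normal[OF assms(2) d assms(4)] by simp
  qed
  show ?thesis
  proof (intro exI conjI ballI allI)
    show "gaussian_vec M Z 0 ((sigma\<^sup>2 / real CARD('n)) *\<^sub>R Omega X lam)" by (rule gv)
  next
    fix \<omega> j
    let ?b = "binit (X *v beta0 + eps \<omega>)"
    have th: "theta0 X beta0 $ j = proj_X X $ j $ j * beta0 $ j + (\<Sum>k\<in>UNIV - {j}. proj_X X $ j $ k * beta0 $ k)"
      unfolding theta0_def matrix_vector_mult_def by (simp add: sum.remove[of UNIV j])
    have sd: "(\<Sum>k\<in>UNIV - {j}. proj_X X $ j $ k * (?b $ k - beta0 $ k))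
       = (\<Sum>k\<in>UNIV - {j}. proj_X X $ j $ k * ?b $ k) - (\<Sum>k\<in>UNIV - {j}. proj_X X $ j $ k * beta0 $ k)"
      by (simp add: right_diff_distrib sum_subtractf)
    show "ridge_corr X lam binit (X *v beta0 + eps \<omega>) $ j
        = Z \<omega> $ j
          + (proj_X X $ j $ j * beta0 $ j
             - (\<Sum>k\<in>UNIV - {j}. proj_X X $ j $ k * (?b $ k - beta0 $ k))
             + (prob_space.expectation M (\<lambda>\<omega>'. ridge X lam (X *v beta0 + eps \<omega>') $ j)
                - theta0 X beta0 $ j))"
      unfolding ridge_corr_def Eridge th sd by (simp add: dec Z_def)
  qed
qed

end
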